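(* There exist $b_1,b_2\in L^\infty_{loc}(\mathbb{R})$ such that $C_bH=[b_2,[b_1,H]]$ is bounded on $L^2(\mathbb{R})$, while $S_{2+\varepsilon}(b_1,b_2)=\infty$ and $T_{2+\varepsilon}(b_1,b_2)=\infty$ for every $\varepsilon>0$. In particular, finiteness of $S_{2+\varepsilon}+T_{2+\varepsilon}$ for some $\varepsilon>0$ does not characterize the $L^2$-boundedness of $C_bH$.
   Context: $H$ is the Hilbert transform $Hf(x)=\lim_{\varepsilon\to0}\int_{|x-y|>\varepsilon}\frac{f(y)}{x-y}dy$; $[A,B]=AB-BA$ with $b_i$ acting by multiplication; the commutator is defined on $L^\infty_c$ and bounded on $L^2$ means $\|C_bHf\|_2\le K\|f\|_2$ for $f\in L^\infty_c$. For $r>0$, with $\langle g\rangle_I=\frac1{|I|}\int_Ig$ and suprema over intervals $I\subset\mathbb{R}$: $S_r(b_1,b_2)=\sup_I\big(\frac1{|I|}\int_I|b_1-\langle b_1\rangle_I|^r\big)^{1/r}\big(\frac1{|I|}\int_I|b_2-\langle b_2\rangle_I|^r\big)^{1/r}$, $T_r(b_1,b_2)=\sup_I\big(\frac1{|I|}\int_I|b_1-\langle b_1\rangle_I|^r|b_2-\langle b_2\rangle_I|^r\big)^{1/r}$. *)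

theory Defs
  imports "HOL-Analysis.Analysis"
begin

definition Linf_loc :: "(real \<Rightarrow> real) \<Rightarrow> bool" where
  "Linf_loc b \<longleftrightarrow> b \<in> borel_measurable lborel \<and>
     (\<forall>a c. \<exists>C. AE x in lborel. x \<in> {a..c} \<longrightarrow> \<bar>b x\<bar> \<le> C)"

definition Linf_c :: "(real \<Rightarrow> real) \<Rightarrow> bool" where
  "Linf_c f \<longleftrightarrow> f \<in> borel_measurable lborel \<and>
     (\<exists>C. AE x in lborel. \<bar>f x\<bar> \<le> C) \<and>
     (\<exists>R. AE x in lborel. R < \<bar>x\<bar> \<longrightarrow> f x = 0)"

definition trunc_hilbert :: "(real \<Rightarrow> real) \<Rightarrow> real \<Rightarrow> real \<Rightarrow> real" where
  "trunc_hilbert f \<epsilon> x = (\<integral>y\<in>{y. \<epsilon> < \<bar>x - y\<bar>}. f y / (x - y) \<partial>lborel)"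

definition hilbert :: "(real \<Rightarrow> real) \<Rightarrow> real \<Rightarrow> real" where
  "hilbert f x = Lim (at_right 0) (\<lambda>\<epsilon>. trunc_hilbert f \<epsilon> x)"

definition comm1 :: "(real \<Rightarrow> real) \<Rightarrow> (real \<Rightarrow> real) \<Rightarrow> real \<Rightarrow> real" where
  "comm1 b g x = b x * hilbert g x - hilbert (\<lambda>y. b y * g y) x"

definition comm2 :: "(real \<Rightarrow> real) \<Rightarrow> (real \<Rightarrow> real) \<Rightarrow> (real \<Rightarrow> real) \<Rightarrow> real \<Rightarrow> real" where
  "comm2 b1 b2 f x = b2 x * comm1 b1 f x - comm1 b1 (\<lambda>y. b2 y * f y) x"

definition L2_bounded_on_Linf_c :: "((real \<Rightarrow> real) \<Rightarrow> real \<Rightarrow> real) \<Rightarrow> bool" where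
  "L2_bounded_on_Linf_c T \<longleftrightarrow> (\<exists>K\<ge>0. \<forall>f. Linf_c f \<longrightarrow>
     (\<integral>\<^sup>+x. ennreal ((T f x)\<^sup>2) \<partial>lborel) \<le> ennreal (K\<^sup>2) * (\<integral>\<^sup>+x. ennreal ((f x)\<^sup>2) \<partial>lborel))"

definition avg :: "(real \<Rightarrow> real) \<Rightarrow> real \<Rightarrow> real \<Rightarrow> real" where
  "avg b a c = (\<integral>x\<in>{a..c}. b x \<partial>lborel) / (c - a)"

definition osc :: "real \<Rightarrow> (real \<Rightarrow> real) \<Rightarrow> real \<Rightarrow> real \<Rightarrow> real" where
  "osc r b a c = ((\<integral>x\<in>{a..c}. \<bar>b x - avg b a c\<bar> powr r \<partial>lborel) / (c - a)) powr (1 / r)"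

definition S_osc :: "real \<Rightarrow> (real \<Rightarrow> real) \<Rightarrow> (real \<Rightarrow> real) \<Rightarrow> ereal" where
  "S_osc r b1 b2 = (SUP I\<in>{(a, c). a < c}. ereal (osc r b1 (fst I) (snd I) * osc r b2 (fst I) (snd I)))"

definition T_osc :: "real \<Rightarrow> (real \<Rightarrow> real) \<Rightarrow> (real \<Rightarrow> real) \<Rightarrow> ereal" where
  "T_osc r b1 b2 = (SUP I\<in>{(a, c). a < c}. ereal (
     ((\<integral>x\<in>{fst I..snd I}. \<bar>b1 x - avg b1 (fst I) (snd I)\<bar> powr r *
          \<bar>b2 x - avg b2 (fst I) (snd I)\<bar> powr r \<partial>lborel) / (snd I - fst I)) powr (1 / r)))"

end

theory Submission
  imports Defs
begin
definition bA :: "real \<Rightarrow> real" where "bA = indicator {0..1}"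
definition vv :: "nat \<Rightarrow> real" where "vv k = 2^k / (real k + 1)"
definition BB :: "nat \<Rightarrow> real set" where "BB k = {2 * 4^k .. 3 * 4^k}"
definition bB :: "real \<Rightarrow> real" where "bB x = (\<Sum>k. vv k * indicator (BB k) x)"

lemma vv_nonneg: "0 \<le> vv k" by (simp add: vv_def)

lemma BB_disj: assumes "x \<in> BB j" "x \<in> BB k" shows "j = k"
proof (rule ccontr)
  assume "j \<noteq> k"
  then consider "j < k" | "k < j" by linarith
  then show False
  proof cases
    case 1
    have "(4::real)^k \<ge> 4^(Suc j)" using 1 by (intro power_increasing) auto
    moreover have "(0::real) < 4^j" by simp
    ultimately show False using assms unfolding BB_def atLeastAtMost_iff power_Suc by linarith
  next
    case 2
    have "(4::real)^j \<ge> 4^(Suc k)" using 2 by (intro power_increasing) auto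
    moreover have "(0::real) < 4^k" by simp
    ultimately show False using assms unfolding BB_def atLeastAtMost_iff power_Suc by linarith
  qed
qed

lemma bB_in: assumes "x \<in> BB k" shows "bB x = vv k"
proof -
  have "(\<lambda>j. vv j * indicator (BB j) x) = (\<lambda>j. if j = k then vv j else 0)"
  proof
    fix j show "vv j * indicator (BB j) x = (if j = k then vv j else 0)"
      using assms BB_disj[of x j k] by (cases "j = k") (auto simp: indicator_def)
  qed
  then have "(\<lambda>j. vv j * indicator (BB j) x) sums vv k" using sums_single[of k vv] by simp
  then show ?thesis unfolding bB_def by (rule sums_unique[symmetric])
qed

lemma bB_out: assumes "\<And>k. x \<notin> BB k" shows "bB x = 0"
  using assms by (simp add: bB_def)

lemma bB_cases: "(\<exists>k. x \<in> BB k \<and> bB x = vv k) \<or> ((\<forall>k. x \<notin> BB k) \<and> bB x = 0)"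
  using bB_in bB_out by blast

lemma bB_nonneg: "0 \<le> bB x"
  using bB_cases[of x] vv_nonneg by auto

lemma bB_nz: "bB x \<noteq> 0 \<Longrightarrow> x \<ge> 2"
proof -
  assume "bB x \<noteq> 0"
  then obtain k where "x \<in> BB k" using bB_cases[of x] by auto
  moreover have "(1::real) \<le> 4^k" by simp
  ultimately show ?thesis unfolding BB_def by (auto simp del: one_le_power)
qed

lemma bB_le: "bB x \<le> \<bar>x\<bar>"
proof (cases "\<exists>k. x \<in> BB k")
  case True
  then obtain k where k: "x \<in> BB k" by auto
  have "vv k \<le> 2^k" unfolding vv_def by (simp add: divide_le_eq)
  also have "(2::real)^k \<le> 4^k" by (intro power_mono) auto
  finally show ?thesis using k bB_in[OF k] by (auto simp: BB_def)
next
  case False then show ?thesis using bB_out by auto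
qed

lemma bB_meas[measurable]: "bB \<in> borel_measurable borel"
  unfolding bB_def BB_def by measurable

lemma bA_meas[measurable]: "bA \<in> borel_measurable borel"
  unfolding bA_def by measurable

lemma bA_bB: "bA y * bB y = 0"
  using bB_nz[of y] unfolding bA_def indicator_def by fastforce


lemma hilbert_zero: "hilbert (\<lambda>y. 0) x = 0"
proof -
  have "(\<lambda>\<epsilon>. trunc_hilbert (\<lambda>y. 0) \<epsilon> x) = (\<lambda>\<epsilon>. 0)"
    by (simp add: trunc_hilbert_def)
  then show ?thesis unfolding hilbert_def
    by (simp add: tendsto_Lim[OF trivial_limit_at_right_real tendsto_const])
qed

lemma hilbert_gap:
  assumes "\<And>y. g y \<noteq> 0 \<Longrightarrow> 1 \<le> \<bar>x - y\<bar>"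
  shows "hilbert g x = (\<integral>y. g y / (x - y) \<partial>lborel)"
proof -
  let ?I = "(\<integral>y. g y / (x - y) \<partial>lborel)"
  have ev: "eventually (\<lambda>\<epsilon>. ?I = trunc_hilbert g \<epsilon> x) (at_right (0::real))"
    unfolding eventually_at_right_field
  proof (intro exI[of _ 1] conjI allI impI)
    fix e :: real assume e: "0 < e" "e < 1"
    have "(\<lambda>y. indicator {y. e < \<bar>x - y\<bar>} y *\<^sub>R (g y / (x - y))) = (\<lambda>y. g y / (x - y))"
    proof
      fix y show "indicator {y. e < \<bar>x - y\<bar>} y *\<^sub>R (g y / (x - y)) = g y / (x - y)"
        using assms[of y] e by (cases "g y = 0") (auto simp: indicator_def)
    qed
    then show "?I = trunc_hilbert g e x"
      unfolding trunc_hilbert_def set_lebesgue_integral_def by simp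
  qed simp
  have "((\<lambda>\<epsilon>. trunc_hilbert g \<epsilon> x) \<longlongrightarrow> ?I) (at_right 0)"
    by (rule Lim_transform_eventually[OF tendsto_const ev])
  then show ?thesis unfolding hilbert_def
    by (rule tendsto_Lim[OF trivial_limit_at_right_real])
qed

lemma CS_key:
  fixes f b :: "real \<Rightarrow> real"
  assumes [measurable]: "f \<in> borel_measurable borel" "b \<in> borel_measurable borel"
    and gap: "\<And>y. b y \<noteq> 0 \<Longrightarrow> 1 \<le> \<bar>x - y\<bar>"
  shows "ennreal ((hilbert (\<lambda>y. b y * f y) x)^2) \<le>
    (\<integral>\<^sup>+y. ennreal ((f y)^2) \<partial>lborel) * (\<integral>\<^sup>+y. ennreal ((b y / (x - y))^2) \<partial>lborel)"
proof -
  define G where "G y = b y * f y / (x - y)" for y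
  have H: "hilbert (\<lambda>y. b y * f y) x = integral\<^sup>L lborel G"
    unfolding G_def by (rule hilbert_gap) (use gap in auto)
  have "ennreal \<bar>integral\<^sup>L lborel G\<bar> \<le> (\<integral>\<^sup>+y. ennreal \<bar>G y\<bar> \<partial>lborel)"
  proof (cases "integrable lborel G")
    case True
    then show ?thesis using integral_norm_bound_ennreal[OF True] by simp
  next
    case False
    then show ?thesis by (simp add: not_integrable_integral_eq)
  qed
  also have "\<dots> = (\<integral>\<^sup>+y. ennreal \<bar>f y\<bar> * ennreal \<bar>b y / (x - y)\<bar> \<partial>lborel)"
    by (intro nn_integral_cong) (simp add: G_def abs_mult ennreal_mult'' [symmetric] mult.commute)
  finally have le1: "ennreal \<bar>integral\<^sup>L lborel G\<bar> \<le> \<dots>" .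
  have "ennreal ((integral\<^sup>L lborel G)^2) = (ennreal \<bar>integral\<^sup>L lborel G\<bar>)^2"
    by (simp add: ennreal_power)
  also have "\<dots> \<le> (\<integral>\<^sup>+y. ennreal \<bar>f y\<bar> * ennreal \<bar>b y / (x - y)\<bar> \<partial>lborel)^2"
    by (rule power_mono[OF le1]) simp
  also have "\<dots> \<le> (\<integral>\<^sup>+y. (ennreal \<bar>f y\<bar>)^2 \<partial>lborel) * (\<integral>\<^sup>+y. (ennreal \<bar>b y / (x - y)\<bar>)^2 \<partial>lborel)"
    by (rule Cauchy_Schwarz_nn_integral) measurable
  also have "\<dots> = (\<integral>\<^sup>+y. ennreal ((f y)^2) \<partial>lborel) * (\<integral>\<^sup>+y. ennreal ((b y / (x - y))^2) \<partial>lborel)"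
    by (simp add: ennreal_power power_divide)
  finally show ?thesis using H by (simp add: power_divide)
qed

lemma ennreal_term_le: "(f::nat\<Rightarrow>ennreal) k \<le> suminf f"
  using sum_le_suminf[OF summableI, of "{k}" f] by simp

lemma aux4: "(a::real) > 0 \<Longrightarrow> c > 0 \<Longrightarrow> a / c / (2*a)^2 = 1/(4*c*a)"
  by (simp add: field_simps power2_eq_square)

definition ww :: "nat \<Rightarrow> real" where "ww k = 1 / (4 * (real k + 1)^2 * 4^k)"

lemma bB_ratio: assumes "y \<in> BB k" shows "(bB y)^2 / y^2 \<le> ww k"
proof -
  have y: "2 * 4^k \<le> y" using assms by (simp add: BB_def)
  have p: "(0::real) < 4^k" by simp
  have f4: "((2::real)^k)^2 = 4^k" by (simp add: power2_eq_square power_mult_distrib[symmetric])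
  have "(bB y)^2 = 4^k / (real k + 1)^2"
    using bB_in[OF assms] f4 by (simp add: vv_def power_divide)
  moreover have "(2 * 4^k)^2 \<le> y^2" using y p by (intro power_mono) auto
  ultimately have "(bB y)^2 / y^2 \<le> (4^k / (real k + 1)^2) / (2 * 4^k)^2"
    using p by (intro frac_le) auto
  also have "\<dots> = ww k" unfolding ww_def using p by (intro aux4) auto
  finally show ?thesis .
qed

lemma M_fin: "(\<integral>\<^sup>+y. ennreal ((bB y)^2 / y^2) \<partial>lborel) < \<infinity>"
proof -
  have "(\<integral>\<^sup>+y. ennreal ((bB y)^2 / y^2) \<partial>lborel) \<le>
        (\<integral>\<^sup>+y. (\<Sum>k. ennreal (ww k) * indicator (BB k) y) \<partial>lborel)"
  proof (intro nn_integral_mono)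
    fix y
    show "ennreal ((bB y)^2 / y^2) \<le> (\<Sum>k. ennreal (ww k) * indicator (BB k) y)"
    proof (cases "\<exists>k. y \<in> BB k")
      case True
      then obtain k where k: "y \<in> BB k" by auto
      have "ennreal ((bB y)^2 / y^2) \<le> ennreal (ww k) * indicator (BB k) y"
        using bB_ratio[OF k] k by (simp add: ennreal_leI)
      also have "\<dots> \<le> (\<Sum>k. ennreal (ww k) * indicator (BB k) y)"
        by (rule ennreal_term_le)
      finally show ?thesis .
    next
      case False then show ?thesis using bB_out by auto
    qed
  qed
  also have "\<dots> = (\<Sum>k. \<integral>\<^sup>+y. ennreal (ww k) * indicator (BB k) y \<partial>lborel)"
    by (rule nn_integral_suminf) (unfold BB_def, measurable)
  also have "\<dots> = (\<Sum>k. ennreal (1 / (4 * (real k + 1)^2)))"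
  proof (intro suminf_cong)
    fix k
    have e: "emeasure lborel (BB k) = ennreal (4^k)" unfolding BB_def
      by (subst emeasure_lborel_Icc) auto
    have "ww k * 4^k = 1 / (4 * (real k + 1)^2)" unfolding ww_def by (simp add: field_simps)
    have w0: "0 \<le> ww k" by (simp add: ww_def)
    have "(\<integral>\<^sup>+y. ennreal (ww k) * indicator (BB k) y \<partial>lborel) = ennreal (ww k) * emeasure lborel (BB k)"
      by (rule nn_integral_cmult_indicator) (unfold BB_def, measurable)
    also have "\<dots> = ennreal (ww k * 4^k)" unfolding e using w0 by (simp add: ennreal_mult)
    finally show "(\<integral>\<^sup>+y. ennreal (ww k) * indicator (BB k) y \<partial>lborel) = ennreal (1 / (4 * (real k + 1)^2))"
      using \<open>ww k * 4^k = 1 / (4 * (real k + 1)^2)\<close> by simp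
  qed
  also have "\<dots> < \<infinity>"
  proof -
    have "summable (\<lambda>n. 1 / real ((n + 1)^2))" using inverse_squares_sums by (rule sums_summable)
    then have "summable (\<lambda>n. (1 / real ((n + 1)^2)) / 4)" by (rule summable_divide)
    moreover have "(\<lambda>n. (1 / real ((n + 1)^2)) / 4) = (\<lambda>k. 1 / (4 * (real k + 1)^2))"
      by (auto simp: add.commute)
    ultimately have "summable (\<lambda>k. 1 / (4 * (real k + 1)^2))" by simp
    then have "(\<Sum>k. ennreal (1 / (4 * (real k + 1)^2))) \<noteq> top"
      by (rule ennreal_suminf_neq_top) simp
    then show ?thesis unfolding less_top by simp
  qed
  finally show ?thesis .
qed

lemma sq_div_le: fixes a c d :: real
  assumes "0 < a" "a \<le> \<bar>d\<bar>" shows "(c / d)^2 \<le> 4 * c^2 / (2*a)^2"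
proof -
  have "(c / d)^2 = c^2 / \<bar>d\<bar>^2" by (simp add: power_divide)
  also have "\<dots> \<le> c^2 / a^2"
  proof -
    have "a^2 \<le> \<bar>d\<bar>^2" by (rule power_mono) (use assms in auto)
    then show ?thesis using assms by (intro frac_le) auto
  qed
  also have "\<dots> = 4 * c^2 / (2*a)^2" by (simp add: power_mult_distrib)
  finally show ?thesis .
qed

lemma comm2_eq: "comm2 bA bB f x = -(bB x * hilbert (\<lambda>y. bA y * f y) x) - bA x * hilbert (\<lambda>y. bB y * f y) x"
proof -
  have "(\<lambda>y. bA y * (bB y * f y)) = (\<lambda>y. 0)"
    using bA_bB by (metis mult.assoc mult_zero_left)
  moreover have z: "bB x * (bA x * hilbert f x) = 0" using bA_bB[of x]
    by (metis mult.assoc mult.commute mult_zero_left)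
  ultimately show ?thesis unfolding comm2_def comm1_def
    by (simp add: hilbert_zero right_diff_distrib)
qed

lemma L2_main: "L2_bounded_on_Linf_c (comm2 bA bB)"
proof -
  define Mr where "Mr = enn2real (\<integral>\<^sup>+y. ennreal ((bB y)^2 / y^2) \<partial>lborel)"
  have MI: "(\<integral>\<^sup>+y. ennreal ((bB y)^2 / y^2) \<partial>lborel) = ennreal Mr"
    unfolding Mr_def using M_fin by (simp add: ennreal_enn2real less_top)
  have Mr0: "0 \<le> Mr" unfolding Mr_def by simp
  define h where "h x = 4 * ((bB x)^2 / x^2) + 4 * Mr * (bA x)^2" for x
  have h_meas[measurable]: "h \<in> borel_measurable borel" unfolding h_def by measurable
  have hint: "(\<integral>\<^sup>+x. ennreal (h x) \<partial>lborel) = ennreal (8 * Mr)"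
  proof -
    have "(\<integral>\<^sup>+x. ennreal (h x) \<partial>lborel) =
       (\<integral>\<^sup>+x. ennreal 4 * ennreal ((bB x)^2 / x^2) + ennreal (4 * Mr) * indicator {0..1::real} x \<partial>lborel)"
    proof (intro nn_integral_cong)
      fix x :: real
      have e1: "ennreal (4 * ((bB x)^2 / x^2)) = ennreal 4 * ennreal ((bB x)^2 / x^2)"
        by (rule ennreal_mult) auto
      have e2: "ennreal (4 * Mr * (bA x)^2) = ennreal (4 * Mr) * indicator {0..1} x"
        by (simp add: bA_def indicator_def)
      have "ennreal (h x) = ennreal (4 * ((bB x)^2 / x^2)) + ennreal (4 * Mr * (bA x)^2)"
        unfolding h_def by (rule ennreal_plus) (use Mr0 in auto)
      then show "ennreal (h x) = ennreal 4 * ennreal ((bB x)^2 / x^2) + ennreal (4 * Mr) * indicator {0..1} x"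
        using e1 e2 by simp
    qed
    also have "\<dots> = ennreal 4 * (\<integral>\<^sup>+x. ennreal ((bB x)^2 / x^2) \<partial>lborel) +
        (\<integral>\<^sup>+x. ennreal (4 * Mr) * indicator {0..1::real} x \<partial>lborel)"
    proof -
      have "(\<integral>\<^sup>+x. ennreal 4 * ennreal ((bB x)^2 / x^2) + ennreal (4 * Mr) * indicator {0..1::real} x \<partial>lborel)
        = (\<integral>\<^sup>+x. ennreal 4 * ennreal ((bB x)^2 / x^2) \<partial>lborel) + (\<integral>\<^sup>+x. ennreal (4 * Mr) * indicator {0..1::real} x \<partial>lborel)"
      proof -
        have m1: "(\<lambda>x. ennreal 4 * ennreal ((bB x)^2 / x^2)) \<in> borel_measurable lborel" by measurable
        have m2: "(\<lambda>x::real. ennreal (4*Mr) * indicator {0..1::real} x :: ennreal) \<in> borel_measurable lborel" by measurable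
        show ?thesis by (rule nn_integral_add[OF m1 m2])
      qed
      moreover have "(\<integral>\<^sup>+x. ennreal 4 * ennreal ((bB x)^2 / x^2) \<partial>lborel) = ennreal 4 * (\<integral>\<^sup>+x. ennreal ((bB x)^2 / x^2) \<partial>lborel)"
        by (rule nn_integral_cmult) measurable
      ultimately show ?thesis by simp
    qed
    also have "\<dots> = ennreal (4 * Mr) + ennreal (4 * Mr)"
      using Mr0 by (simp add: MI nn_integral_cmult_indicator ennreal_mult)
    also have "\<dots> = ennreal (8 * Mr)" using Mr0 by (simp flip: ennreal_plus)
    finally show ?thesis .
  qed
  show ?thesis unfolding L2_bounded_on_Linf_c_def
  proof (intro exI[of _ "sqrt (8 * Mr)"] conjI allI impI)
    show "0 \<le> sqrt (8 * Mr)" using Mr0 by simp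
    fix f assume "Linf_c f"
    then have fm[measurable]: "f \<in> borel_measurable borel" by (simp add: Linf_c_def)
    define N where "N = (\<integral>\<^sup>+y. ennreal ((f y)^2) \<partial>lborel)"
    have pw: "ennreal ((comm2 bA bB f x)^2) \<le> N * ennreal (h x)" for x
    proof (cases "bB x \<noteq> 0")
      case True
      then have x2: "x \<ge> 2" by (rule bB_nz)
      have a0: "bA x = 0" using bA_bB[of x] True by simp
      have c: "(comm2 bA bB f x)^2 = (bB x)^2 * (hilbert (\<lambda>y. bA y * f y) x)^2"
        unfolding comm2_eq a0 by (simp add: power_mult_distrib)
      have gap: "1 \<le> \<bar>x - y\<bar>" if "bA y \<noteq> 0" for y
        using that x2 by (auto simp: bA_def indicator_def split: if_splits)
      have I1: "(\<integral>\<^sup>+y. ennreal ((bA y / (x - y))^2) \<partial>lborel) \<le> ennreal (4 / x^2)"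
      proof -
        have "(\<integral>\<^sup>+y. ennreal ((bA y / (x - y))^2) \<partial>lborel) \<le> (\<integral>\<^sup>+y. ennreal (4 / x^2) * indicator {0..1::real} y \<partial>lborel)"
        proof (intro nn_integral_mono)
          fix y show "ennreal ((bA y / (x - y))^2) \<le> ennreal (4 / x^2) * indicator {0..1} y"
          proof (cases "y \<in> {0..1}")
            case True
            then have "x/2 \<le> \<bar>x - y\<bar>" using x2 by auto
            from sq_div_le[OF _ this, of "bA y"] x2 True
            show ?thesis by (simp add: bA_def ennreal_leI)
          next
            case False then show ?thesis by (simp add: bA_def)
          qed
        qed
        also have "\<dots> = ennreal (4 / x^2)" by (simp add: nn_integral_cmult_indicator)
        finally show ?thesis .
      qed
      have "ennreal ((comm2 bA bB f x)^2) = ennreal ((bB x)^2) * ennreal ((hilbert (\<lambda>y. bA y * f y) x)^2)"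
        unfolding c by (simp add: ennreal_mult)
      also have "\<dots> \<le> ennreal ((bB x)^2) * (N * ennreal (4 / x^2))"
      proof -
        have "ennreal ((hilbert (\<lambda>y. bA y * f y) x)^2) \<le> N * (\<integral>\<^sup>+y. ennreal ((bA y / (x - y))^2) \<partial>lborel)"
          unfolding N_def by (rule CS_key[OF fm bA_meas gap])
        also have "\<dots> \<le> N * ennreal (4 / x^2)" by (rule mult_left_mono[OF I1]) simp
        finally show ?thesis by (rule mult_left_mono) simp
      qed
      also have "\<dots> = N * ennreal (4 * ((bB x)^2 / x^2))"
        by (simp add: ennreal_mult[symmetric] mult_ac)
      also have "\<dots> \<le> N * ennreal (h x)"
        unfolding h_def using Mr0 by (intro mult_left_mono ennreal_leI) auto
      finally show ?thesis .
    next
      case False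
      then have b0: "bB x = 0" by simp
      show ?thesis
      proof (cases "x \<in> {0..1}")
        case False
        then have "bA x = 0" by (simp add: bA_def)
        then show ?thesis unfolding comm2_eq b0 by simp
      next
        case True
        then have a1: "bA x = 1" by (simp add: bA_def)
        have c: "(comm2 bA bB f x)^2 = (hilbert (\<lambda>y. bB y * f y) x)^2"
          unfolding comm2_eq a1 b0 by simp
        have gap: "1 \<le> \<bar>x - y\<bar>" if "bB y \<noteq> 0" for y
          using bB_nz[OF that] True by auto
        have I2: "(\<integral>\<^sup>+y. ennreal ((bB y / (x - y))^2) \<partial>lborel) \<le> ennreal (4 * Mr)"
        proof -
          have "(\<integral>\<^sup>+y. ennreal ((bB y / (x - y))^2) \<partial>lborel) \<le> (\<integral>\<^sup>+y. ennreal 4 * ennreal ((bB y)^2 / y^2) \<partial>lborel)"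
          proof (intro nn_integral_mono)
            fix y show "ennreal ((bB y / (x - y))^2) \<le> ennreal 4 * ennreal ((bB y)^2 / y^2)"
            proof (cases "bB y = 0")
              case True then show ?thesis by simp
            next
              case False
              then have y2: "y \<ge> 2" by (rule bB_nz)
              then have "y/2 \<le> \<bar>x - y\<bar>" using True by auto
              from sq_div_le[OF _ this, of "bB y"] y2
              have "(bB y / (x - y))^2 \<le> 4 * ((bB y)^2 / y^2)" by simp
              then have "ennreal ((bB y / (x - y))^2) \<le> ennreal (4 * ((bB y)^2 / y^2))"
                by (rule ennreal_leI)
              also have "\<dots> = ennreal 4 * ennreal ((bB y)^2 / y^2)" by (rule ennreal_mult) auto
              finally show ?thesis .
            qed
          qed
          also have "\<dots> = ennreal (4 * Mr)" using Mr0 by (simp add: nn_integral_cmult MI ennreal_mult)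
          finally show ?thesis .
        qed
        have "ennreal ((comm2 bA bB f x)^2) \<le> N * ennreal (4 * Mr)"
        proof -
          have "ennreal ((hilbert (\<lambda>y. bB y * f y) x)^2) \<le> N * (\<integral>\<^sup>+y. ennreal ((bB y / (x - y))^2) \<partial>lborel)"
            unfolding N_def by (rule CS_key[OF fm bB_meas gap])
          also have "\<dots> \<le> N * ennreal (4 * Mr)" by (rule mult_left_mono[OF I2]) simp
          finally show ?thesis unfolding c .
        qed
        also have "\<dots> \<le> N * ennreal (h x)"
          unfolding h_def a1 by (intro mult_left_mono ennreal_leI) auto
        finally show ?thesis .
      qed
    qed
    have "(\<integral>\<^sup>+x. ennreal ((comm2 bA bB f x)^2) \<partial>lborel) \<le> (\<integral>\<^sup>+x. N * ennreal (h x) \<partial>lborel)"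
      by (intro nn_integral_mono pw)
    also have "\<dots> = N * ennreal (8 * Mr)" by (simp add: nn_integral_cmult hint)
    also have "\<dots> = ennreal ((sqrt (8 * Mr))^2) * N" using Mr0 by (simp add: mult.commute)
    finally show "(\<integral>\<^sup>+x. ennreal ((comm2 bA bB f x)^2) \<partial>lborel) \<le> ennreal ((sqrt (8 * Mr))^2) * (\<integral>\<^sup>+x. ennreal ((f x)^2) \<partial>lborel)"
      unfolding N_def .
  qed
qed

lemma Qlim: assumes r: "r > (2::real)"
  shows "filterlim (\<lambda>k::nat. 2^k / (real k + 1) / 24 * (1 / (3 * 4^k)) powr (1/r)) at_top sequentially"
proof -
  define c where "c = 1 - 2/r"
  have c: "c > 0" using r unfolding c_def by (simp add: field_simps)
  define C where "C = (1/3) powr (1/r) / 24"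
  have C: "C > 0" unfolding C_def by simp
  have eq: "2^k / (real k + 1) / 24 * (1 / (3 * 4^k)) powr (1/r) = C * (2 powr (real k * c) / (real k + 1))" for k :: nat
  proof -
    have a: "(1 / (3 * 4^k)) powr (1/r) = (1/3) powr (1/r) * (1/4^k) powr (1/r)"
      by (subst powr_mult[symmetric]) auto
    have h4a: "(4::real)^k = 2^(2*k)" by (simp add: power_mult)
    have h4b: "(2::real)^(2*k) = 2 powr (real (2*k))" by (rule powr_realpow[symmetric]) simp
    have h4: "(4::real)^k = 2 powr (2 * real k)" using h4a h4b by simp
    have b1: "1/4^k = (2::real) powr (-(2 * real k))" unfolding h4 by (simp add: powr_minus_divide)
    have b: "(1/4^k) powr (1/r) = 2 powr (-(2 * real k) / r)" unfolding b1 powr_powr by simp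
    have d: "(2::real)^k = 2 powr real k" by (simp add: powr_realpow)
    have ex: "real k + (-(2 * real k) / r) = real k * c" unfolding c_def using r by (simp add: field_simps)
    have e: "2 powr real k * 2 powr (-(2 * real k) / r) = 2 powr (real k * c)"
      by (simp only: powr_add[symmetric] ex)
    show ?thesis unfolding a b d C_def using e[symmetric]
      by (simp add: field_simps)
  qed
  have lim: "filterlim (\<lambda>k::nat. 2 powr (real k * c) / (real k + 1)) at_top sequentially"
    using c by real_asymp
  have "filterlim (\<lambda>k::nat. C * (2 powr (real k * c) / (real k + 1))) at_top sequentially"
    by (rule filterlim_tendsto_pos_mult_at_top[OF tendsto_const C lim])
  then show ?thesis by (simp only: eq)
qed

lemma si_bnd:
  fixes g :: "real \<Rightarrow> real"
  assumes [measurable]: "g \<in> borel_measurable borel" and b: "\<And>x. x \<in> {a..c} \<Longrightarrow> \<bar>g x\<bar> \<le> B"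
  shows "set_integrable lborel {a..c} g"
  unfolding set_integrable_def
proof (rule Bochner_Integration.integrable_bound)
  show "integrable lborel (\<lambda>x. B * indicator {a..c} x :: real)"
    by (intro integrable_mult_right integrable_real_indicator) (auto simp: emeasure_lborel_Icc_eq)
  show "(\<lambda>x. indicator {a..c} x *\<^sub>R g x) \<in> borel_measurable lborel" by measurable
  show "AE x in lborel. norm (indicator {a..c} x *\<^sub>R g x) \<le> norm (B * indicator {a..c} x :: real)"
  proof (intro AE_I2)
    fix x show "norm (indicator {a..c} x *\<^sub>R g x) \<le> norm (B * indicator {a..c} x :: real)"
      using b[of x] by (cases "x \<in> {a..c}") auto
  qed
qed

lemma si_lower:
  fixes g :: "real \<Rightarrow> real"
  assumes gi: "set_integrable lborel {a..b} g" and pq: "a \<le> p" "p \<le> q" "q \<le> b"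
    and lo: "\<And>x. x \<in> {p..q} \<Longrightarrow> c \<le> g x" and nn: "\<And>x. x \<in> {a..b} \<Longrightarrow> 0 \<le> g x"
    and c: "0 \<le> c"
  shows "c * (q - p) \<le> (\<integral>x\<in>{a..b}. g x \<partial>lborel)"
proof -
  have "(\<integral>x\<in>{a..b}. c * indicator {p..q} x \<partial>lborel) = (\<integral>x. c * indicator {p..q} x \<partial>lborel)"
    unfolding set_lebesgue_integral_def
    by (intro Bochner_Integration.integral_cong refl) (use pq in \<open>auto simp: indicator_def\<close>)
  also have "\<dots> = c * (q - p)" using pq by simp
  finally have eq: "(\<integral>x\<in>{a..b}. c * indicator {p..q} x \<partial>lborel) = c * (q - p)" .
  have si2: "set_integrable lborel {a..b} (\<lambda>x. c * indicator {p..q} x)"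
    by (rule si_bnd[where B = c]) (use c in \<open>auto simp: indicator_def\<close>)
  have "(\<integral>x\<in>{a..b}. c * indicator {p..q} x \<partial>lborel) \<le> (\<integral>x\<in>{a..b}. g x \<partial>lborel)"
  proof (rule set_integral_mono[OF si2 gi])
    fix x :: real assume "x \<in> {a..b}"
    then show "c * indicator {p..q} x \<le> g x" using lo[of x] nn[of x] by (cases "x \<in> {p..q}") auto
  qed
  then show ?thesis using eq by linarith
qed

lemma root_bound:
  fixes I c m L r :: real
  assumes "0 \<le> c" "0 < r" "0 < L" "0 \<le> m" "c powr r * m \<le> I"
  shows "c * (m / L) powr (1/r) \<le> (I / L) powr (1/r)"
proof -
  have "(c powr r * (m / L)) powr (1/r) \<le> (I / L) powr (1/r)"
    using assms by (intro powr_mono2) (auto simp: divide_right_mono)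
  moreover have "(c powr r * (m / L)) powr (1/r) = (c powr r) powr (1/r) * (m / L) powr (1/r)"
    by (rule powr_mult)
  moreover have "(c powr r) powr (1/r) = c"
    using assms by (simp add: powr_powr)
  ultimately show ?thesis by simp
qed

lemma bB_zero_mid: assumes "x \<in> {4^k .. 3/2 * 4^k}" shows "bB x = 0"
proof (rule bB_out)
  fix j show "x \<notin> BB j"
  proof
    assume xj: "x \<in> BB j"
    show False
    proof (cases "j < k")
      case True
      have "(4::real)^k \<ge> 4^(Suc j)" using True by (intro power_increasing) auto
      moreover have "(0::real) < 4^j" by simp
      ultimately show False using assms xj unfolding BB_def atLeastAtMost_iff power_Suc by linarith
    next
      case False
      have "(4::real)^j \<ge> 4^k" using False by (intro power_increasing) auto
      moreover have "(0::real) < 4^k" by simp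
      ultimately show False using assms xj unfolding BB_def atLeastAtMost_iff by linarith
    qed
  qed
qed

lemma bA_meas'[measurable]: "bA \<in> borel_measurable lborel" by simp
lemma bB_meas'[measurable]: "bB \<in> borel_measurable lborel" by simp

lemma avg_bA: assumes "1 \<le> L" shows "avg bA 0 L = 1 / L"
proof -
  have "(\<lambda>x. indicator {0..L} x *\<^sub>R bA x) = indicator {0..1}"
    using assms by (auto simp: bA_def indicator_def)
  then have "(\<integral>x\<in>{0..L}. bA x \<partial>lborel) = 1"
    unfolding set_lebesgue_integral_def by simp
  then show ?thesis unfolding avg_def by simp
qed

lemma int_bB_lower: "vv k * 4^k \<le> (\<integral>x\<in>{0..3*4^k}. bB x \<partial>lborel)"
proof -
  have "vv k * (3 * 4^k - 2 * 4^k) \<le> (\<integral>x\<in>{0..3*4^k}. bB x \<partial>lborel)"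
  proof (rule si_lower)
    show "set_integrable lborel {0..3*4^k} bB"
    proof (rule si_bnd[where B = "3*4^k"])
      show "bB \<in> borel_measurable borel" by (rule bB_meas)
      fix x :: real assume "x \<in> {0..3*4^k}"
      then show "\<bar>bB x\<bar> \<le> 3*4^k" using bB_le[of x] bB_nonneg[of x] by auto
    qed
  qed (auto simp: bB_nonneg vv_nonneg bB_in BB_def)
  then show ?thesis by simp
qed

lemma main_bounds:
  fixes r :: real and k :: nat
  assumes r: "2 < r"
  defines "L \<equiv> (3::real) * 4^k"
  shows "vv k / 24 * (1 / L) powr (1/r) \<le> osc r bA 0 L * osc r bB 0 L"
    and "vv k / 24 * (1 / L) powr (1/r) \<le>
      ((\<integral>x\<in>{0..L}. \<bar>bA x - avg bA 0 L\<bar> powr r * \<bar>bB x - avg bB 0 L\<bar> powr r \<partial>lborel) / (L - 0)) powr (1 / r)"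
proof -
  have L1: "3 \<le> L" unfolding L_def by simp
  have Lp: "0 < L" using L1 by simp
  define v where "v = vv k"
  have v0: "0 \<le> v" unfolding v_def by (rule vv_nonneg)
  define m1 where "m1 = avg bA 0 L"
  have m1: "m1 = 1 / L" unfolding m1_def using L1 by (intro avg_bA) simp
  have hm1: "0 \<le> m1" "m1 \<le> 1/3" unfolding m1 using L1 by (auto intro!: frac_le)
  have hm1': "1/2 \<le> \<bar>1 - m1\<bar>" using hm1 by (auto simp: abs_if)
  define m2 where "m2 = avg bB 0 L"
  have m2: "v / 3 \<le> m2"
  proof -
    have "v * 4^k \<le> (\<integral>x\<in>{0..L}. bB x \<partial>lborel)" unfolding v_def L_def by (rule int_bB_lower)
    then show ?thesis unfolding m2_def avg_def L_def by (simp add: field_simps)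
  qed
  have bnd: "\<bar>bB x\<bar> \<le> L" if "x \<in> {0..L}" for x using bB_le[of x] bB_nonneg[of x] that by auto
  have bndA: "\<bar>bA x\<bar> \<le> 1" for x :: real by (simp add: bA_def indicator_def)
  have oA: "1/2 * (1 / L) powr (1/r) \<le> osc r bA 0 L"
  proof -
    have "(1/2) powr r * (1 - 0) \<le> (\<integral>x\<in>{0..L}. \<bar>bA x - m1\<bar> powr r \<partial>lborel)"
    proof (rule si_lower)
      show "set_integrable lborel {0..L} (\<lambda>x. \<bar>bA x - m1\<bar> powr r)"
      proof (rule si_bnd[where B = "(1 + \<bar>m1\<bar>) powr r"])
        fix x :: real show "\<bar>\<bar>bA x - m1\<bar> powr r\<bar> \<le> (1 + \<bar>m1\<bar>) powr r"
          using bndA[of x] r by (auto intro!: powr_mono2)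
      qed measurable
      fix x :: real assume "x \<in> {0..1}"
      then have "bA x = 1" by (simp add: bA_def)
      moreover have "1/2 \<le> \<bar>1 - m1\<bar>" by (rule hm1')
      ultimately show "(1/2) powr r \<le> \<bar>bA x - m1\<bar> powr r" using r by (auto intro!: powr_mono2)
    qed (use L1 in auto)
    from root_bound[OF _ _ Lp _ this] r
    show ?thesis unfolding osc_def m1_def by simp
  qed
  have oB: "v / 2 * (1/6) powr (1/r) \<le> osc r bB 0 L"
  proof -
    have si: "set_integrable lborel {0..L} (\<lambda>x. \<bar>bB x - m2\<bar> powr r)"
    proof (rule si_bnd[where B = "(L + \<bar>m2\<bar>) powr r"])
      fix x :: real assume "x \<in> {0..L}"
      then show "\<bar>\<bar>bB x - m2\<bar> powr r\<bar> \<le> (L + \<bar>m2\<bar>) powr r"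
        using bnd[of x] r by (auto intro!: powr_mono2)
    qed measurable
    have "(v/2) powr r * (L/6) \<le> (\<integral>x\<in>{0..L}. \<bar>bB x - m2\<bar> powr r \<partial>lborel)"
    proof (cases "v/2 \<le> \<bar>m2\<bar>")
      case True
      have "(v/2) powr r * (3/2 * 4^k - 4^k) \<le> (\<integral>x\<in>{0..L}. \<bar>bB x - m2\<bar> powr r \<partial>lborel)"
      proof (rule si_lower[OF si])
        fix x :: real assume "x \<in> {4^k..3/2*4^k}"
        then have "bB x = 0" by (rule bB_zero_mid)
        then show "(v/2) powr r \<le> \<bar>bB x - m2\<bar> powr r" using True v0 r by (auto intro!: powr_mono2)
      qed (auto simp: L_def)
      then show ?thesis unfolding L_def by (simp add: field_simps)
    next
      case False
      have "(v/2) powr r * (5/2 * 4^k - 2 * 4^k) \<le> (\<integral>x\<in>{0..L}. \<bar>bB x - m2\<bar> powr r \<partial>lborel)"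
      proof (rule si_lower[OF si])
        fix x :: real assume "x \<in> {2 * 4^k..5/2*4^k}"
        then have "x \<in> BB k" unfolding BB_def by auto
        then have "bB x = v" unfolding v_def by (rule bB_in)
        moreover have "v/2 \<le> \<bar>v - m2\<bar>" using False by linarith
        ultimately show "(v/2) powr r \<le> \<bar>bB x - m2\<bar> powr r" using v0 r by (auto intro!: powr_mono2)
      qed (auto simp: L_def)
      then show ?thesis unfolding L_def by (simp add: field_simps)
    qed
    from root_bound[OF _ _ Lp _ this] r v0 Lp
    show ?thesis unfolding osc_def m2_def by simp
  qed
  have s6: "1/6 \<le> (1/6::real) powr (1/r)"
    using powr_mono'[of "1/r" 1 "1/6::real"] r by simp
  have pA: "0 \<le> (1 / L) powr (1/r)" by simp
  have oA0: "0 \<le> osc r bA 0 L" unfolding osc_def by simp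
  show "vv k / 24 * (1 / L) powr (1/r) \<le> osc r bA 0 L * osc r bB 0 L"
  proof -
    have "vv k / 24 * (1 / L) powr (1/r) = (1/2 * (1 / L) powr (1/r)) * (v / 2 * (1/6))"
      unfolding v_def by simp
    also have "\<dots> \<le> (1/2 * (1 / L) powr (1/r)) * (v / 2 * (1/6) powr (1/r))"
      using s6 v0 by (intro mult_left_mono mult_left_mono) auto
    also have "\<dots> \<le> osc r bA 0 L * osc r bB 0 L"
      using oA oB v0 oA0 by (intro mult_mono) auto
    finally show ?thesis .
  qed
  have "(v/6) powr r * (1 - 0) \<le> (\<integral>x\<in>{0..L}. \<bar>bA x - m1\<bar> powr r * \<bar>bB x - m2\<bar> powr r \<partial>lborel)"
  proof (rule si_lower)
    show "set_integrable lborel {0..L} (\<lambda>x. \<bar>bA x - m1\<bar> powr r * \<bar>bB x - m2\<bar> powr r)"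
    proof (rule si_bnd[where B = "(1 + \<bar>m1\<bar>) powr r * (L + \<bar>m2\<bar>) powr r"])
      fix x :: real assume "x \<in> {0..L}"
      then show "\<bar>\<bar>bA x - m1\<bar> powr r * \<bar>bB x - m2\<bar> powr r\<bar> \<le> (1 + \<bar>m1\<bar>) powr r * (L + \<bar>m2\<bar>) powr r"
      proof -
        have a: "\<bar>bA x - m1\<bar> powr r \<le> (1 + \<bar>m1\<bar>) powr r"
          using bndA[of x] r by (intro powr_mono2) auto
        have b: "\<bar>bB x - m2\<bar> powr r \<le> (L + \<bar>m2\<bar>) powr r"
          using bnd[of x] r \<open>x \<in> {0..L}\<close> by (intro powr_mono2) auto
        show ?thesis using mult_mono[OF a b] by simp
      qed
    qed measurable
    fix x :: real assume x: "x \<in> {0..1}"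
    then have "bA x = 1" by (simp add: bA_def)
    moreover have "bB x = 0" using x bB_nz[of x] by force
    moreover have "1/2 \<le> \<bar>1 - m1\<bar>" by (rule hm1')
    moreover have "v/3 \<le> \<bar>m2\<bar>" using m2 by linarith
    ultimately have a: "(1/2) powr r \<le> \<bar>bA x - m1\<bar> powr r" and b: "(v/3) powr r \<le> \<bar>bB x - m2\<bar> powr r"
      using r v0 by (auto intro!: powr_mono2)
    have "(1/2) powr r * (v/3) powr r \<le> \<bar>bA x - m1\<bar> powr r * \<bar>bB x - m2\<bar> powr r"
      using mult_mono[OF a b] by simp
    moreover have "(v/6) powr r = (1/2) powr r * (v/3) powr r"
      by (subst powr_mult[symmetric]) auto
    ultimately show "(v/6) powr r \<le> \<bar>bA x - m1\<bar> powr r * \<bar>bB x - m2\<bar> powr r" by simp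
  next
    fix x :: real assume "x \<in> {0..L}"
    show "0 \<le> \<bar>bA x - m1\<bar> powr r * \<bar>bB x - m2\<bar> powr r" by simp
  qed (use L1 v0 in auto)
  from root_bound[OF _ _ Lp _ this] r v0
  have "v / 6 * (1 / L) powr (1/r) \<le>
      ((\<integral>x\<in>{0..L}. \<bar>bA x - m1\<bar> powr r * \<bar>bB x - m2\<bar> powr r \<partial>lborel) / L) powr (1 / r)" by simp
  moreover have "vv k / 24 * (1 / L) powr (1/r) \<le> v / 6 * (1 / L) powr (1/r)"
    unfolding v_def using vv_nonneg[of k] by (intro mult_right_mono) auto
  ultimately show "vv k / 24 * (1 / L) powr (1/r) \<le>
      ((\<integral>x\<in>{0..L}. \<bar>bA x - avg bA 0 L\<bar> powr r * \<bar>bB x - avg bB 0 L\<bar> powr r \<partial>lborel) / (L - 0)) powr (1 / r)"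
    unfolding m1_def m2_def by simp
qed

lemma big_k: assumes "2 < r" shows "\<exists>k. z \<le> vv k / 24 * (1 / ((3::real) * 4^k)) powr (1/r)"
proof -
  from Qlim[OF assms] have "eventually (\<lambda>k. z \<le> 2^k / (real k + 1) / 24 * (1 / (3 * 4^k)) powr (1/r)) sequentially"
    unfolding filterlim_at_top by blast
  then obtain k where "z \<le> 2^k / (real k + 1) / 24 * (1 / (3 * 4^k)) powr (1/r)"
    unfolding eventually_sequentially by blast
  then show ?thesis unfolding vv_def by blast
qed

theorem corollary4p8:
  shows "\<exists>b1 b2. Linf_loc b1 \<and> Linf_loc b2 \<and> L2_bounded_on_Linf_c (comm2 b1 b2) \<and>
    (\<forall>\<epsilon>>0. S_osc (2 + \<epsilon>) b1 b2 = \<infinity> \<and> T_osc (2 + \<epsilon>) b1 b2 = \<infinity>)"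
proof (rule exI[of _ bA], rule exI[of _ bB], intro conjI allI impI)
  show "Linf_loc bA" unfolding Linf_loc_def
  proof (intro conjI allI)
    show "bA \<in> borel_measurable lborel" by simp
    fix a c :: real
    show "\<exists>C. AE x in lborel. x \<in> {a..c} \<longrightarrow> \<bar>bA x\<bar> \<le> C"
      by (intro exI[of _ 1] AE_I2) (simp add: bA_def indicator_def)
  qed
  show "Linf_loc bB" unfolding Linf_loc_def
  proof (intro conjI allI)
    show "bB \<in> borel_measurable lborel" by simp
    fix a c :: real
    show "\<exists>C. AE x in lborel. x \<in> {a..c} \<longrightarrow> \<bar>bB x\<bar> \<le> C"
    proof -
      have h: "\<bar>bB x\<bar> \<le> max \<bar>a\<bar> \<bar>c\<bar>" if "x \<in> {a..c}" for x
        using that bB_le[of x] bB_nonneg[of x] by auto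
      show ?thesis by (intro exI[of _ "max \<bar>a\<bar> \<bar>c\<bar>"] AE_I2 impI h)
    qed
  qed
  show "L2_bounded_on_Linf_c (comm2 bA bB)" by (rule L2_main)
  fix \<epsilon> :: real assume e: "0 < \<epsilon>"
  define r where "r = 2 + \<epsilon>"
  have r: "2 < r" using e unfolding r_def by simp
  show "S_osc (2 + \<epsilon>) bA bB = \<infinity>"
    unfolding S_osc_def r_def[symmetric]
  proof (rule SUP_PInfty)
    fix n :: nat
    obtain k where k: "real n \<le> vv k / 24 * (1 / ((3::real) * 4^k)) powr (1/r)" using big_k[OF r] by blast
    show "\<exists>I\<in>{(a, c). a < c}. ereal (real n) \<le> ereal (osc r bA (fst I) (snd I) * osc r bB (fst I) (snd I))"
      by (intro bexI[of _ "(0, 3 * 4^k)"]) (use k main_bounds(1)[OF r, of k] in auto)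
  qed
  show "T_osc (2 + \<epsilon>) bA bB = \<infinity>"
    unfolding T_osc_def r_def[symmetric]
  proof (rule SUP_PInfty)
    fix n :: nat
    obtain k where k: "real n \<le> vv k / 24 * (1 / ((3::real) * 4^k)) powr (1/r)" using big_k[OF r] by blast
    show "\<exists>I\<in>{(a, c). a < c}. ereal (real n) \<le> ereal (((\<integral>x\<in>{fst I..snd I}. \<bar>bA x - avg bA (fst I) (snd I)\<bar> powr r *
          \<bar>bB x - avg bB (fst I) (snd I)\<bar> powr r \<partial>lborel) / (snd I - fst I)) powr (1 / r))"
      by (intro bexI[of _ "(0, 3 * 4^k)"]) (use k main_bounds(2)[OF r, of k] in auto)
  qed
qed

end
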